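(* Let $A\in\{0,1,-1\}^{m\times n}$ be such that $G_A$ is a $t$-left-regular $(\gamma,\mu)$-unique expander, and let $s_{\max}$ be the maximum degree of a right vertex of $G_A$. Then for any $p\ge1$, $\delta_1>0$, $\delta_2\in(0,1)$, and every $\gamma n$-sparse $x\in\mathbb{R}^n$, $$\|Ax\|_p^p\ge\left(\frac{t(1-\mu)}{(1+\delta_1)^{p-1}}-\frac{\mu t}{\delta_1^{p-1}}(s_{\max}-1)^{p-1}\right)\|x\|_p^p,$$ $$\|Ax\|_p^p\le\left(\frac{t}{(1-\delta_2)^{p-1}}+\frac{\mu t}{\delta_2^{p-1}}(s_{\max}-1)^{p-1}\right)\|x\|_p^p.$$
   Context: $G_A=(V_L=[n],V_R=[m],E)$ is the bipartite graph with an edge $\{u,r\}$ iff $A_{r,u}\ne0$. It is a $t$-left-regular $(\gamma,\mu)$-unique expander if every left vertex has degree $t$ and every $S\subseteq V_L$ with $|S|\le\gamma n$ has at least $t(1-\mu)|S|$ right vertices with exactly one neighbor in $S$. A vector is $k$-sparse if it has at most $k$ nonzero coordinates. *)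

theory Defs
  imports Complex_Main
begin

text \<open>An m x n matrix is a function A :: nat => nat => real, entry A r u for row r < m and
  column u < n.  The bipartite graph G_A has left vertices {..<n}, right vertices {..<m}
  and an edge {u,r} iff A r u \<noteq> 0.\<close>

definition nbrs_right :: "nat \<Rightarrow> (nat \<Rightarrow> nat \<Rightarrow> real) \<Rightarrow> nat \<Rightarrow> nat set" where
  "nbrs_right m A u = {r. r < m \<and> A r u \<noteq> 0}"

definition left_regular :: "nat \<Rightarrow> nat \<Rightarrow> (nat \<Rightarrow> nat \<Rightarrow> real) \<Rightarrow> nat \<Rightarrow> bool" where
  "left_regular m n A t \<longleftrightarrow> (\<forall>u<n. card (nbrs_right m A u) = t)"

definition unique_neighbors :: "nat \<Rightarrow> (nat \<Rightarrow> nat \<Rightarrow> real) \<Rightarrow> nat set \<Rightarrow> nat set" where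
  "unique_neighbors m A S = {r. r < m \<and> card {u \<in> S. A r u \<noteq> 0} = 1}"

definition unique_expander ::
  "nat \<Rightarrow> nat \<Rightarrow> (nat \<Rightarrow> nat \<Rightarrow> real) \<Rightarrow> nat \<Rightarrow> real \<Rightarrow> real \<Rightarrow> bool" where
  "unique_expander m n A t \<gamma> \<mu> \<longleftrightarrow> left_regular m n A t \<and>
     (\<forall>S. S \<subseteq> {..<n} \<and> real (card S) \<le> \<gamma> * real n \<longrightarrow>
        real (card (unique_neighbors m A S)) \<ge> real t * (1 - \<mu>) * real (card S))"

definition s_max :: "nat \<Rightarrow> nat \<Rightarrow> (nat \<Rightarrow> nat \<Rightarrow> real) \<Rightarrow> nat" where
  "s_max m n A = Max (insert 0 {card {u. u < n \<and> A r u \<noteq> 0} | r. r < m})"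

definition sparse :: "nat \<Rightarrow> (nat \<Rightarrow> real) \<Rightarrow> real \<Rightarrow> bool" where
  "sparse n x k \<longleftrightarrow> real (card {i. i < n \<and> x i \<noteq> 0}) \<le> k"

definition mat_vec :: "nat \<Rightarrow> (nat \<Rightarrow> nat \<Rightarrow> real) \<Rightarrow> (nat \<Rightarrow> real) \<Rightarrow> nat \<Rightarrow> real" where
  "mat_vec n A x r = (\<Sum>u<n. A r u * x u)"

definition pnorm_pow :: "nat \<Rightarrow> real \<Rightarrow> (nat \<Rightarrow> real) \<Rightarrow> real" where
  "pnorm_pow k p x = (\<Sum>i<k. \<bar>x i\<bar> powr p)"

text \<open>Real power with the usual convention 0^0 = 1 (Isabelle's powr has 0 powr 0 = 0).\<close>
definition rpow :: "real \<Rightarrow> real \<Rightarrow> real" where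
  "rpow b e = (if b = 0 then (if e = 0 then 1 else 0) else b powr e)"

end

theory Submission
  imports Defs "HOL-Analysis.Convex"
begin


lemma powr_convex0:
  fixes p :: real assumes p: "p \<ge> 1"
  shows "convex_on {0..} (\<lambda>x. x powr p)"
proof (rule convex_onI)
  show "convex {0::real..}" by (simp add: convex_real_interval)
  fix t x y :: real assume t: "0 < t" "t < 1" and xy: "x \<in> {0..}" "y \<in> {0..}"
  have tp: "s powr p \<le> s" if "0 \<le> s" "s \<le> 1" for s :: real
    using that p by (metis powr_one powr_mono')
  show "((1 - t) *\<^sub>R x + t *\<^sub>R y) powr p \<le> (1 - t) * x powr p + t * y powr p"
  proof (cases "x = 0 \<or> y = 0")
    case True
    then show ?thesis
    proof
      assume "x = 0"
      then have "((1 - t) *\<^sub>R x + t *\<^sub>R y) powr p = t powr p * y powr p"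
        using t xy by (simp add: powr_mult)
      also have "\<dots> \<le> t * y powr p"
        using tp[of t] t by (simp add: mult_right_mono)
      finally show ?thesis using \<open>x = 0\<close> p by simp
    next
      assume "y = 0"
      then have "((1 - t) *\<^sub>R x + t *\<^sub>R y) powr p = (1-t) powr p * x powr p"
        using t xy by (simp add: powr_mult)
      also have "\<dots> \<le> (1-t) * x powr p"
        using tp[of "1-t"] t by (simp add: mult_right_mono)
      finally show ?thesis using \<open>y = 0\<close> p by simp
    qed
  next
    case False
    then have "x \<in> {0<..}" "y \<in> {0<..}" using xy by auto
    then show ?thesis using convex_onD[OF powr_convex[OF p], of t x y] t by auto
  qed
qed

lemma scale_powr:
  fixes e y p :: real assumes e: "e > 0" and y: "y \<ge> 0"
  shows "e * (y / e) powr p = y powr p / e powr (p - 1)"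
proof -
  have ep: "e powr p = e powr (p - 1) * e" using e by (simp add: powr_diff)
  have "e * (y / e) powr p = e * (y powr p / e powr p)" using e y by (simp add: powr_divide)
  also have "\<dots> = y powr p / e powr (p - 1)" unfolding ep using e by (simp add: field_simps)
  finally show ?thesis .
qed

lemma two_point:
  fixes y z d p :: real
  assumes y: "y \<ge> 0" and z: "z \<ge> 0" and d: "0 < d" "d < 1" and p: "p \<ge> 1"
  shows "(y + z) powr p \<le> y powr p / (1 - d) powr (p - 1) + z powr p / d powr (p - 1)"
proof -
  have "(y + z) = (1 - d) *\<^sub>R (y / (1 - d)) + d *\<^sub>R (z / d)"
    using d by simp
  then have "(y + z) powr p \<le> (1 - d) * (y / (1 - d)) powr p + d * (z / d) powr p"
    using convex_onD[OF powr_convex0[OF p], of d "y / (1 - d)" "z / d"] d y z by auto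
  also have "(1 - d) * (y / (1 - d)) powr p = y powr p / (1 - d) powr (p - 1)"
    using scale_powr[of "1 - d" y p] d y by simp
  also have "d * (z / d) powr p = z powr p / d powr (p - 1)"
    using scale_powr[of d z p] d z by simp
  finally show ?thesis .
qed

lemma power_mean:
  fixes c :: "'a \<Rightarrow> real" and p :: real
  assumes F: "finite F" and c: "\<And>i. i \<in> F \<Longrightarrow> c i \<ge> 0" and p: "p \<ge> 1"
  shows "(\<Sum>i\<in>F. c i) powr p \<le> real (card F) powr (p - 1) * (\<Sum>i\<in>F. c i powr p)"
proof (cases "F = {}")
  case True then show ?thesis using p by simp
next
  case False
  define k where "k = real (card F)"
  have k: "k > 0" using F False by (simp add: k_def card_gt_0_iff)
  have "(\<Sum>i\<in>F. (1 / k) *\<^sub>R c i) powr p \<le> (\<Sum>i\<in>F. (1 / k) * c i powr p)"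
    by (rule convex_on_sum[OF F False powr_convex0[OF p]]) (use k c in \<open>auto simp: k_def\<close>)
  moreover have "(\<Sum>i\<in>F. (1 / k) *\<^sub>R c i) = (\<Sum>i\<in>F. c i) / k"
    by (simp add: sum_divide_distrib)
  moreover have "((\<Sum>i\<in>F. c i) / k) powr p = (\<Sum>i\<in>F. c i) powr p / k powr p"
    using k c by (simp add: powr_divide sum_nonneg)
  moreover have "(\<Sum>i\<in>F. (1 / k) * c i powr p) = (\<Sum>i\<in>F. c i powr p) / k"
    by (simp add: sum_divide_distrib)
  moreover have "k powr p = k powr (p - 1) * k" using k by (simp add: powr_diff)
  ultimately have "(\<Sum>i\<in>F. c i) powr p / (k powr (p - 1) * k) \<le> (\<Sum>i\<in>F. c i powr p) / k"
    by simp
  then show ?thesis using k by (simp add: field_simps k_def[symmetric])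
qed



lemma row_upper:
  fixes w y z d p :: real
  assumes "w \<ge> 0" "y \<ge> 0" "z \<ge> 0" "w \<le> y + z" "0 < d" "d < 1" "p \<ge> 1"
  shows "w powr p \<le> y powr p / (1 - d) powr (p - 1) + z powr p / d powr (p - 1)"
proof -
  have "w powr p \<le> (y + z) powr p" using assms by (intro powr_mono2) auto
  also have "\<dots> \<le> y powr p / (1 - d) powr (p - 1) + z powr p / d powr (p - 1)"
    using two_point assms by auto
  finally show ?thesis .
qed

lemma row_lower:
  fixes w y z d p :: real
  assumes w: "w \<ge> 0" and y: "y \<ge> 0" and z: "z \<ge> 0" and yw: "y \<le> w + z" and d: "0 < d" and p: "p \<ge> 1"
  shows "w powr p \<ge> y powr p / (1 + d) powr (p - 1) - z powr p / d powr (p - 1)"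
proof -
  define l where "l = d / (1 + d)"
  have l: "0 < l" "l < 1" using d by (auto simp: l_def)
  have 1: "1 - l = 1 / (1 + d)" using d by (simp add: l_def field_simps)
  have "y powr p \<le> (w + z) powr p" using assms by (intro powr_mono2) auto
  also have "\<dots> \<le> w powr p / (1 - l) powr (p - 1) + z powr p / l powr (p - 1)"
    using two_point w z l p by auto
  also have "w powr p / (1 - l) powr (p - 1) = w powr p * (1 + d) powr (p - 1)"
    unfolding 1 using d by (simp add: powr_divide)
  also have "z powr p / l powr (p - 1) = z powr p / d powr (p - 1) * (1 + d) powr (p - 1)"
    unfolding l_def using d by (simp add: powr_divide)
  finally have "y powr p \<le> (w powr p + z powr p / d powr (p - 1)) * (1 + d) powr (p - 1)"
    by (simp add: algebra_simps)
  moreover have "(1 + d) powr (p - 1) > 0" using d by simp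
  ultimately have "y powr p / (1 + d) powr (p - 1) \<le> w powr p + z powr p / d powr (p - 1)"
    by (simp add: divide_le_eq)
  then show ?thesis by simp
qed



definition rowset :: "(nat \<Rightarrow> nat \<Rightarrow> real) \<Rightarrow> nat set \<Rightarrow> nat \<Rightarrow> nat set" where
  "rowset A S r = {u \<in> S. A r u \<noteq> 0}"

definition defect :: "nat \<Rightarrow> (nat \<Rightarrow> nat \<Rightarrow> real) \<Rightarrow> (nat \<Rightarrow> real) \<Rightarrow> nat set \<Rightarrow> real" where
  "defect m A a S = (\<Sum>r<m. if rowset A S r = {} then 0
      else sum a (rowset A S r) - Max (a ` rowset A S r))"

definition nfc :: "nat \<Rightarrow> (nat \<Rightarrow> nat \<Rightarrow> real) \<Rightarrow> nat set \<Rightarrow> real" where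
  "nfc m A S = (\<Sum>r<m. if rowset A S r = {} then 0 else real (card (rowset A S r)) - 1)"

lemma finite_rowset: "finite S \<Longrightarrow> finite (rowset A S r)"
  by (simp add: rowset_def)

lemma row_shift:
  fixes a :: "nat \<Rightarrow> real"
  assumes "finite T" "T \<noteq> {}"
  shows "sum (\<lambda>u. a u - c) T - Max ((\<lambda>u. a u - c) ` T)
         = sum a T - Max (a ` T) - c * (real (card T) - 1)"
proof -
  have "(\<lambda>u. a u - c) ` T = (\<lambda>y. y - c) ` (a ` T)" by auto
  moreover have "Max ((\<lambda>y. y - c) ` (a ` T)) = Max (a ` T) - c"
    by (rule mono_Max_commute[symmetric]) (use assms in \<open>auto simp: mono_def\<close>)
  ultimately show ?thesis by (simp add: sum_subtractf algebra_simps)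
qed

lemma defect_shift:
  assumes "finite S"
  shows "defect m A (\<lambda>u. a u - c) S = defect m A a S - c * nfc m A S"
  unfolding defect_def nfc_def sum_distrib_left sum_subtractf[symmetric]
  by (rule sum.cong) (auto simp: row_shift finite_rowset assms)

lemma defect_insert_min:
  fixes a :: "nat \<Rightarrow> real"
  assumes S: "finite S" and w: "w \<notin> S" and aw: "a w = 0" and nn: "\<And>u. u \<in> S \<Longrightarrow> a u \<ge> 0"
  shows "defect m A a (insert w S) = defect m A a S"
  unfolding defect_def
proof (rule sum.cong[OF refl])
  fix r
  let ?T = "rowset A S r" and ?T' = "rowset A (insert w S) r"
  have fT: "finite ?T" using S by (simp add: finite_rowset)
  have wT: "w \<notin> ?T" using w by (simp add: rowset_def)
  show "(if ?T' = {} then 0 else sum a ?T' - Max (a ` ?T')) =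
        (if ?T = {} then 0 else sum a ?T - Max (a ` ?T))"
  proof (cases "A r w = 0")
    case True
    then have "?T' = ?T" by (auto simp: rowset_def)
    then show ?thesis by simp
  next
    case False
    then have T': "?T' = insert w ?T" by (auto simp: rowset_def)
    show ?thesis
    proof (cases "?T = {}")
      case True
      then show ?thesis using T' aw by simp
    next
      case False
      obtain u where u: "u \<in> ?T" using False by blast
      have "a u \<ge> 0" using nn u by (simp add: rowset_def)
      moreover have "a u \<le> Max (a ` ?T)" using fT u by (intro Max_ge) auto
      ultimately have "Max (a ` ?T) \<ge> 0" by linarith
      then have "Max (a ` ?T') = Max (a ` ?T)"
        using T' fT False aw by (simp add: max_def)
      then show ?thesis using T' fT wT aw False by simp
    qed
  qed
qed

lemma double_count:
  fixes a :: "nat \<Rightarrow> real"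
  assumes S: "S \<subseteq> {..<n}" and lr: "left_regular m n A t"
  shows "(\<Sum>r<m. sum a (rowset A S r)) = real t * sum a S"
proof -
  have fS: "finite S" using S finite_subset by blast
  have "(\<Sum>r<m. sum a (rowset A S r)) = (\<Sum>r<m. \<Sum>u\<in>S. if A r u \<noteq> 0 then a u else 0)"
    unfolding rowset_def using fS by (simp add: sum.inter_filter)
  also have "\<dots> = (\<Sum>u\<in>S. \<Sum>r<m. if A r u \<noteq> 0 then a u else 0)"
    by (rule sum.swap)
  also have "\<dots> = (\<Sum>u\<in>S. real t * a u)"
  proof (rule sum.cong[OF refl])
    fix u assume u: "u \<in> S"
    have "(\<Sum>r<m. if A r u \<noteq> 0 then a u else 0) = sum (\<lambda>_. a u) {r \<in> {..<m}. A r u \<noteq> 0}"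
      by (rule sum.inter_filter[symmetric]) simp
    also have "\<dots> = real (card (nbrs_right m A u)) * a u"
      by (simp add: nbrs_right_def)
    also have "card (nbrs_right m A u) = t" using lr u S by (auto simp: left_regular_def)
    finally show "(\<Sum>r<m. if A r u \<noteq> 0 then a u else 0) = real t * a u" .
  qed
  finally show ?thesis by (simp add: sum_distrib_left)
qed

lemma nfc_le:
  assumes exp: "unique_expander m n A t \<gamma> \<mu>" and S: "S \<subseteq> {..<n}"
    and cS: "real (card S) \<le> \<gamma> * real n"
  shows "nfc m A S \<le> \<mu> * real t * real (card S)"
proof -
  have lr: "left_regular m n A t" using exp by (simp add: unique_expander_def)
  have U: "real t * (1 - \<mu>) * real (card S) \<le> real (card (unique_neighbors m A S))"
    using exp S cS by (simp add: unique_expander_def)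
  have fS: "finite S" using S finite_subset by blast
  have "unique_neighbors m A S = {r \<in> {..<m}. card (rowset A S r) = 1}"
    by (auto simp: unique_neighbors_def rowset_def)
  then have "real (card (unique_neighbors m A S)) = (\<Sum>r<m. if card (rowset A S r) = 1 then 1 else 0)"
    by (simp add: sum.inter_filter[symmetric])
  also have "\<dots> \<le> (\<Sum>r<m. if rowset A S r = {} then 0 else 1)"
    by (rule sum_mono) auto
  finally have U2: "real (card (unique_neighbors m A S)) \<le> (\<Sum>r<m. if rowset A S r = {} then 0 else 1)" .
  have "nfc m A S = (\<Sum>r<m. real (card (rowset A S r))) - (\<Sum>r<m. if rowset A S r = {} then 0 else 1)"
    unfolding nfc_def sum_subtractf[symmetric] by (rule sum.cong) auto
  also have "(\<Sum>r<m. real (card (rowset A S r))) = real t * real (card S)"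
    using double_count[OF S lr, of "\<lambda>_. 1"] by simp
  finally show ?thesis using U U2 by (simp add: algebra_simps)
qed

lemma defect_bound:
  assumes exp: "unique_expander m n A t \<gamma> \<mu>"
  shows "S \<subseteq> {..<n} \<Longrightarrow> real (card S) \<le> \<gamma> * real n \<Longrightarrow> (\<forall>u\<in>S. a u \<ge> 0) \<Longrightarrow>
    defect m A a S \<le> \<mu> * real t * sum a S"
proof (induction "card S" arbitrary: S a rule: less_induct)
  case less
  have fS: "finite S" using less.prems(1) finite_subset by blast
  show ?case
  proof (cases "S = {}")
    case True
    then show ?thesis by (simp add: defect_def rowset_def)
  next
    case False
    have "Min (a ` S) \<in> a ` S" using fS False by simp
    then obtain w where w: "w \<in> S" "a w = Min (a ` S)" by auto
    have wmin: "a w \<le> a u" if "u \<in> S" for u using w that fS by simp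
    define a' where "a' = (\<lambda>u. a u - a w)"
    define S' where "S' = S - {w}"
    have SS': "S = insert w S'" "w \<notin> S'" using w by (auto simp: S'_def)
    have fS': "finite S'" using fS by (simp add: S'_def)
    have cS': "card S' < card S" by (metis S'_def card_Diff1_less fS w(1))
    have IH: "defect m A a' S' \<le> \<mu> * real t * sum a' S'"
      apply (rule less.hyps[OF cS'])
      using less.prems cS' wmin card_mono[OF fS, of S'] by (auto simp: S'_def a'_def)
    have "defect m A a' S = defect m A a' S'"
      unfolding SS'(1) by (rule defect_insert_min) (use fS' SS' wmin in \<open>auto simp: a'_def\<close>)
    moreover have "defect m A a' S = defect m A a S - a w * nfc m A S"
      unfolding a'_def by (rule defect_shift[OF fS])
    moreover have e3: "sum a' S' = sum a S - a w * real (card S)"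
    proof -
      have "sum a' S = sum a' S'" unfolding SS'(1) using SS' fS' by (simp add: a'_def)
      moreover have "sum a' S = sum a S - a w * real (card S)"
        by (simp add: a'_def sum_subtractf)
      ultimately show ?thesis by simp
    qed
    moreover have "a w * nfc m A S \<le> a w * (\<mu> * real t * real (card S))"
      using nfc_le[OF exp less.prems(1,2)] less.prems(3) w by (intro mult_left_mono) auto
    moreover have "\<mu> * real t * sum a S = \<mu> * real t * sum a' S' + a w * (\<mu> * real t * real (card S))"
      unfolding e3 by (simp add: algebra_simps)
    ultimately show ?thesis using IH by linarith
  qed
qed



theorem lemma6p1:
  fixes m n t :: nat and A :: "nat \<Rightarrow> nat \<Rightarrow> real" and \<gamma> \<mu> p \<delta>\<^sub>1 \<delta>\<^sub>2 :: real
    and x :: "nat \<Rightarrow> real"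
  assumes entries: "\<forall>r<m. \<forall>u<n. A r u \<in> {0, 1, -1}"
    and exp: "unique_expander m n A t \<gamma> \<mu>"
    and p: "p \<ge> 1" and d1: "\<delta>\<^sub>1 > 0" and d2: "0 < \<delta>\<^sub>2" "\<delta>\<^sub>2 < 1"
    and xs: "sparse n x (\<gamma> * real n)"
  shows "pnorm_pow m p (mat_vec n A x) \<ge>
           (real t * (1 - \<mu>) / (1 + \<delta>\<^sub>1) powr (p - 1)
            - \<mu> * real t / \<delta>\<^sub>1 powr (p - 1) * rpow (real (s_max m n A) - 1) (p - 1))
           * pnorm_pow n p x
     \<and> pnorm_pow m p (mat_vec n A x) \<le>
           (real t / (1 - \<delta>\<^sub>2) powr (p - 1)
            + \<mu> * real t / \<delta>\<^sub>2 powr (p - 1) * rpow (real (s_max m n A) - 1) (p - 1))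
           * pnorm_pow n p x"
proof -
  define S where "S = {u. u < n \<and> x u \<noteq> 0}"
  define a where "a = (\<lambda>u. \<bar>x u\<bar> powr p)"
  define T where "T = rowset A S"
  define M where "M = (\<lambda>r. if T r = {} then 0 else Max (a ` T r))"
  define Y where "Y = (\<lambda>r. sum a (T r) - M r)"
  define R where "R = rpow (real (s_max m n A) - 1) (p - 1)"
  define c1 where "c1 = (1 + \<delta>\<^sub>1) powr (p - 1)"
  define e1 where "e1 = \<delta>\<^sub>1 powr (p - 1)"
  define c2 where "c2 = (1 - \<delta>\<^sub>2) powr (p - 1)"
  define e2 where "e2 = \<delta>\<^sub>2 powr (p - 1)"
  define w where "w = (\<lambda>r. \<bar>mat_vec n A x r\<bar> powr p)"
  have pos: "c1 > 0" "e1 > 0" "c2 > 0" "e2 > 0"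
    using d1 d2 by (auto simp: c1_def e1_def c2_def e2_def)
  have Sn: "S \<subseteq> {..<n}" by (auto simp: S_def)
  have fS: "finite S" using Sn finite_subset by blast
  have cS: "real (card S) \<le> \<gamma> * real n" using xs by (simp add: sparse_def S_def)
  have lr: "left_regular m n A t" using exp by (simp add: unique_expander_def)
  have an: "a u \<ge> 0" for u by (simp add: a_def)
  have fT: "finite (T r)" for r using fS by (simp add: T_def finite_rowset)
  have Tsub: "T r \<subseteq> S" for r by (auto simp: T_def rowset_def)
  have norm: "pnorm_pow n p x = sum a S"
    unfolding pnorm_pow_def a_def
    by (rule sum.mono_neutral_right) (auto simp: S_def)
  have lhs: "pnorm_pow m p (mat_vec n A x) = sum w {..<m}"
    by (simp add: pnorm_pow_def w_def)
  have Dsum: "defect m A a S = sum Y {..<m}"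
    unfolding defect_def Y_def M_def T_def by (rule sum.cong) auto
  have Y0: "Y r \<ge> 0" for r
  proof (cases "T r = {}")
    case True then show ?thesis by (simp add: Y_def M_def)
  next
    case False
    have "Max (a ` T r) \<in> a ` T r" using False fT by simp
    then obtain v where "v \<in> T r" "Max (a ` T r) = a v" by auto
    moreover have "a v \<le> sum a (T r)" using \<open>v \<in> T r\<close> fT an by (intro member_le_sum) auto
    ultimately show ?thesis using False by (simp add: Y_def M_def)
  qed
  have D0: "defect m A a S \<ge> 0" unfolding Dsum by (intro sum_nonneg) (use Y0 in auto)
  have Dle: "defect m A a S \<le> \<mu> * real t * sum a S"
    using defect_bound[OF exp Sn cS] an by auto
  have sumM: "sum M {..<m} = real t * sum a S - defect m A a S"
    using double_count[OF Sn lr, of a] unfolding Dsum Y_def T_def[symmetric]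
    by (simp add: sum_subtractf)
  have R0: "R \<ge> 0" by (simp add: R_def rpow_def)
  have row: "w r \<le> M r / c2 + R * Y r / e2 \<and> w r \<ge> M r / c1 - R * Y r / e1" if r: "r < m" for r
  proof (cases "T r = {}")
    case True
    have "mat_vec n A x r = 0"
      unfolding mat_vec_def
    proof (rule sum.neutral, rule ballI)
      fix u assume "u \<in> {..<n}"
      then show "A r u * x u = 0" using True by (auto simp: T_def rowset_def S_def)
    qed
    then show ?thesis using True p by (simp add: w_def M_def Y_def)
  next
    case False
    let ?f = "\<lambda>u. \<bar>x u\<bar>"
    have "Max (?f ` T r) \<in> ?f ` T r" using False fT by simp
    then obtain v where v: "v \<in> T r" "?f v = Max (?f ` T r)" by auto
    have vmax: "?f u \<le> ?f v" if "u \<in> T r" for u using v that fT by simp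
    have Mv: "M r = a v"
      unfolding M_def using False
      by (auto intro!: Max_eqI simp: fT a_def v(1) intro: powr_mono2 vmax) (use p vmax in \<open>auto intro: powr_mono2\<close>)
    define F where "F = T r - {v}"
    have fF: "finite F" using fT by (simp add: F_def)
    have sumT: "sum a (T r) = a v + sum a F" unfolding F_def using v fT by (simp add: sum.remove)
    have YF: "Y r = sum a F" using sumT Mv by (simp add: Y_def)
    have Tn: "T r \<subseteq> {..<n}" using Tsub Sn by blast
    have Aabs: "\<bar>A r u\<bar> = 1" if "u \<in> T r" for u
    proof -
      have "u < n" "A r u \<noteq> 0" using that Tn by (auto simp: T_def rowset_def)
      then show ?thesis using entries r by fastforce
    qed
    have mv: "mat_vec n A x r = (\<Sum>u\<in>T r. A r u * x u)"
      unfolding mat_vec_def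
      by (rule sum.mono_neutral_right) (use Tn in \<open>auto simp: T_def rowset_def S_def\<close>)
    also have "\<dots> = A r v * x v + (\<Sum>u\<in>F. A r u * x u)"
      unfolding F_def using v fT by (simp add: sum.remove)
    finally have mv2: "mat_vec n A x r = A r v * x v + (\<Sum>u\<in>F. A r u * x u)" .
    define z where "z = (\<Sum>u\<in>F. \<bar>x u\<bar>)"
    have z0: "z \<ge> 0" by (simp add: z_def sum_nonneg)
    have "\<bar>\<Sum>u\<in>F. A r u * x u\<bar> \<le> (\<Sum>u\<in>F. \<bar>A r u * x u\<bar>)" by (rule sum_abs)
    also have "\<dots> = z" unfolding z_def
      by (rule sum.cong) (auto simp: abs_mult Aabs F_def)
    finally have zb: "\<bar>\<Sum>u\<in>F. A r u * x u\<bar> \<le> z" .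
    have av: "\<bar>A r v * x v\<bar> = \<bar>x v\<bar>" using Aabs[OF v(1)] by (simp add: abs_mult)
    have wle: "\<bar>mat_vec n A x r\<bar> \<le> \<bar>x v\<bar> + z" using zb av unfolding mv2 by linarith
    have wge: "\<bar>x v\<bar> \<le> \<bar>mat_vec n A x r\<bar> + z" using zb av unfolding mv2 by linarith
    have zp: "z powr p \<le> R * Y r"
    proof (cases "F = {}")
      case True then show ?thesis using p by (simp add: z_def YF)
    next
      case Fne: False
      have "z powr p \<le> real (card F) powr (p - 1) * sum a F"
        unfolding z_def a_def by (rule power_mean[OF fF _ p]) auto
      moreover have "real (card F) powr (p - 1) \<le> R"
      proof -
        have c1F: "card F \<ge> 1" using Fne fF by (simp add: Suc_le_eq card_gt_0_iff)
        have "card (T r) \<le> card {u. u < n \<and> A r u \<noteq> 0}"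
          by (rule card_mono) (auto simp: T_def rowset_def S_def)
        also have "\<dots> \<le> s_max m n A"
          unfolding s_max_def using r by (intro Max_ge) auto
        finally have "card F + 1 \<le> s_max m n A" using v fT[of r] card_gt_0_iff[of "T r"] by (auto simp: F_def card_Diff_singleton)
        then have "real (card F) \<le> real (s_max m n A) - 1" "real (s_max m n A) - 1 \<noteq> 0"
          using c1F by linarith+
        then show ?thesis unfolding R_def rpow_def using p by (simp add: powr_mono2)
      qed
      ultimately show ?thesis using YF an sum_nonneg[of F a]
        by (smt (verit) mult_right_mono)
    qed
    have ax: "\<bar>x v\<bar> powr p = M r" by (simp add: Mv a_def)
    have up: "w r \<le> M r / c2 + z powr p / e2"
      using row_upper[OF _ _ z0 wle d2 p] unfolding w_def c2_def e2_def ax by simp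
    have lo: "w r \<ge> M r / c1 - z powr p / e1"
      using row_lower[OF _ _ z0 wge d1 p] unfolding w_def c1_def e1_def ax by simp
    have "z powr p / e2 \<le> R * Y r / e2" "z powr p / e1 \<le> R * Y r / e1"
      using zp pos by (auto intro: divide_right_mono)
    then show ?thesis using up lo by linarith
  qed
  have up: "sum w {..<m} \<le> sum M {..<m} / c2 + R * sum Y {..<m} / e2"
  proof -
    have "sum w {..<m} \<le> (\<Sum>r<m. M r / c2 + R * Y r / e2)" using row by (intro sum_mono) auto
    also have "\<dots> = sum M {..<m} / c2 + R * sum Y {..<m} / e2"
      by (simp add: sum.distrib sum_divide_distrib sum_distrib_left)
    finally show ?thesis .
  qed
  have lo: "sum w {..<m} \<ge> sum M {..<m} / c1 - R * sum Y {..<m} / e1"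
  proof -
    have "sum w {..<m} \<ge> (\<Sum>r<m. M r / c1 - R * Y r / e1)" using row by (intro sum_mono) auto
    moreover have "(\<Sum>r<m. M r / c1 - R * Y r / e1) = sum M {..<m} / c1 - R * sum Y {..<m} / e1"
      by (simp add: sum_subtractf sum_divide_distrib sum_distrib_left)
    ultimately show ?thesis by simp
  qed
  define D where "D = defect m A a S"
  define N where "N = sum a S"
  have N0: "N \<ge> 0" by (simp add: N_def sum_nonneg an)
  have DY: "sum Y {..<m} = D" by (simp add: D_def Dsum)
  have sM: "sum M {..<m} = real t * N - D" by (simp add: sumM D_def N_def)
  have D0': "D \<ge> 0" and Dle': "D \<le> \<mu> * real t * N" using D0 Dle by (auto simp: D_def N_def)
  have "(real t * N - D) / c2 + R * D / e2 \<le> real t * N / c2 + R * (\<mu> * real t * N) / e2"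
  proof -
    have "(real t * N - D) / c2 \<le> real t * N / c2" using D0' pos by (simp add: divide_right_mono)
    moreover have "R * D / e2 \<le> R * (\<mu> * real t * N) / e2"
      using Dle' R0 pos by (intro divide_right_mono mult_left_mono) auto
    ultimately show ?thesis by linarith
  qed
  moreover have "(real t * N - D) / c1 - R * D / e1 \<ge> real t * (1 - \<mu>) * N / c1 - R * (\<mu> * real t * N) / e1"
  proof -
    have "(real t * N - D) / c1 \<ge> real t * (1 - \<mu>) * N / c1" using Dle' pos
      by (intro divide_right_mono) (auto simp: algebra_simps)
    moreover have "R * D / e1 \<le> R * (\<mu> * real t * N) / e1"
      using Dle' R0 pos by (intro divide_right_mono mult_left_mono) auto
    ultimately show ?thesis by linarith
  qed
  ultimately show ?thesis
    unfolding lhs norm N_def[symmetric] c1_def[symmetric] e1_def[symmetric] c2_def[symmetric]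
      e2_def[symmetric] R_def[symmetric]
    using up lo unfolding DY sM by (simp add: algebra_simps add_divide_distrib diff_divide_distrib)
qed

end
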